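(* Let $T$ be a rooted binary tree on $n$ leaves with minimal Colless index, i.e. $\mathcal{C}(T)=c_n$. Then $T$ has minimal Sackin index among all rooted binary trees with $n$ leaves.
   Context: A rooted binary tree with $n\geq 2$ leaves is a rooted tree whose root has degree 2 and all other internal nodes have degree 3; for $n=1$ it is a single node. For a node $u$ let $n_u$ be the number of leaves of the subtree rooted at $u$. For an internal node $v$ with children $v_1,v_2$, the Colless index is $\mathcal{C}(T)=\sum_v|n_{v_1}-n_{v_2}|$ over internal nodes $v$; $c_n$ is its minimum over rooted binary trees with $n$ leaves. The Sackin index is $\mathcal{S}(T)=\sum_{u}n_u$, the sum over all internal nodes $u$ of $T$. *)

theory Defs
  imports Main
begin

text \<open>Rooted binary trees (shapes). A single leaf is a tree on 1 leaf; an internal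
node has exactly two children. Children are ordered in the datatype, but all
indices below are symmetric in the children.\<close>
datatype rbtree = Leaf | Node rbtree rbtree

fun leaves :: "rbtree \<Rightarrow> nat" where
  "leaves Leaf = 1"
| "leaves (Node l r) = leaves l + leaves r"

fun colless :: "rbtree \<Rightarrow> nat" where
  "colless Leaf = 0"
| "colless (Node l r) =
     nat \<bar>int (leaves l) - int (leaves r)\<bar> + colless l + colless r"

fun sackin :: "rbtree \<Rightarrow> nat" where
  "sackin Leaf = 0"
| "sackin (Node l r) = leaves l + leaves r + sackin l + sackin r"

definition min_colless :: "nat \<Rightarrow> nat" where
  "min_colless n = (LEAST c. \<exists>T. leaves T = n \<and> colless T = c)"

end

theory Submission
  imports Defs
begin

function cm :: "nat \<Rightarrow> nat" where
  "cm n = (if n \<le> 1 then 0 else cm (n - n div 2) + cm (n div 2) + n mod 2)"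
  by auto
termination by (relation "measure id") auto

function sm :: "nat \<Rightarrow> nat" where
  "sm n = (if n \<le> 1 then 0 else n + sm (n - n div 2) + sm (n div 2))"
  by auto
termination by (relation "measure id") auto

function bal :: "nat \<Rightarrow> rbtree" where
  "bal n = (if n \<le> 1 then Leaf else Node (bal (n - n div 2)) (bal (n div 2)))"
  by auto
termination by (relation "measure id") auto

declare cm.simps[simp del] sm.simps[simp del] bal.simps[simp del]

lemma cm01[simp]: "cm 0 = 0" "cm (Suc 0) = 0"
  by (simp_all add: cm.simps)
lemma sm01[simp]: "sm 0 = 0" "sm (Suc 0) = 0"
  by (simp_all add: sm.simps)
lemma cm_rec: "2 \<le> n \<Longrightarrow> cm n = cm (n - n div 2) + cm (n div 2) + n mod 2"
  by (subst cm.simps) simp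
lemma sm_rec: "2 \<le> n \<Longrightarrow> sm n = n + sm (n - n div 2) + sm (n div 2)"
  by (subst sm.simps) simp

lemma par: fixes a :: nat obtains i where "a = 2*i" | i where "a = 2*i + 1"
  by (metis div_mult_mod_eq mult.commute mod2_eq_if add_0_right)

lemma pair_split:
  fixes a b :: nat
  shows "(a - a div 2 + b div 2 = (a+b) - (a+b) div 2 \<and> a div 2 + (b - b div 2) = (a+b) div 2)
       \<or> (a - a div 2 + b div 2 = (a+b) div 2 \<and> a div 2 + (b - b div 2) = (a+b) - (a+b) div 2)"
  by (cases a rule: par; cases b rule: par) auto

lemma cm_pair: "cm ((a+b) - (a+b) div 2) + cm ((a+b) div 2)
   = cm (a - a div 2 + b div 2) + cm (a div 2 + (b - b div 2))"
  using pair_split[of a b] by auto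

lemma sm_pair: "sm ((a+b) - (a+b) div 2) + sm ((a+b) div 2)
   = sm (a - a div 2 + b div 2) + sm (a div 2 + (b - b div 2))"
  using pair_split[of a b] by auto

definition good :: "nat \<Rightarrow> nat \<Rightarrow> bool" where
  "good a b = (\<forall>k. \<not> (min a b < 2^k \<and> 2^k < max a b))"

lemma good_sym: "good a b = good b a"
  unfolding good_def by (simp add: min.commute max.commute)

lemma good_1: "good 1 b \<Longrightarrow> b \<le> 2"
  unfolding good_def by (cases "b \<le> 2") (auto dest: spec[of _ 1])

lemma good_1': "b \<le> 2 \<Longrightarrow> good 1 b"
  unfolding good_def
proof (intro allI notI)
  fix k assume b: "b \<le> 2" and h: "min 1 b < 2 ^ k \<and> 2 ^ k < max 1 b"
  then have "(2::nat)^k < 2" by auto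
  then have "k = 0" by (cases k) auto
  then show False using h by auto
qed


lemma arith_q: "min (a - a div 2) (b div 2) < (q::nat) \<and> q < max (a - a div 2) (b div 2)
   \<Longrightarrow> min a b < 2*q \<and> 2*q < max a b"
  by (cases a rule: par; cases b rule: par) (auto simp: min_def max_def split: if_splits)
lemma arith_q2: "min (a div 2) (b - b div 2) < (q::nat) \<and> q < max (a div 2) (b - b div 2)
   \<Longrightarrow> min a b < 2*q \<and> 2*q < max a b"
  by (cases a rule: par; cases b rule: par) (auto simp: min_def max_def split: if_splits)
lemma good_down: "good a b \<Longrightarrow> good (a - a div 2) (b div 2) \<and> good (a div 2) (b - b div 2)"
  unfolding good_def
proof safe
  fix k assume g: "\<forall>k. \<not> (min a b < 2 ^ k \<and> 2 ^ k < max a b)"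
  { assume "min (a - a div 2) (b div 2) < 2 ^ k" "2 ^ k < max (a - a div 2) (b div 2)"
    then have "min a b < 2*2^k \<and> 2*2^k < max a b" using arith_q by blast
    then show False using g[rule_format, of "Suc k"] by simp }
  { assume "min (a div 2) (b - b div 2) < 2 ^ k" "2 ^ k < max (a div 2) (b - b div 2)"
    then have "min a b < 2*2^k \<and> 2*2^k < max a b" using arith_q2 by blast
    then show False using g[rule_format, of "Suc k"] by simp }
qed

lemma arith_up1: "a < 2*(q::nat) \<Longrightarrow> 2*q < b \<Longrightarrow> a div 2 < q \<and> q < b - b div 2"
  by (cases a rule: par; cases b rule: par) auto
lemma arith_up2: "b < 2*(q::nat) \<Longrightarrow> 2*q < a \<Longrightarrow> b div 2 < q \<and> q < a - a div 2"
  by (cases a rule: par; cases b rule: par) auto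
lemma good_up:
  assumes "1 \<le> a" "1 \<le> b" "good (a - a div 2) (b div 2)" "good (a div 2) (b - b div 2)"
  shows "good a b"
  unfolding good_def
proof (intro allI notI)
  fix k assume h: "min a b < 2 ^ k \<and> 2 ^ k < max a b"
  have "k \<noteq> 0" using h assms(1,2) by (cases "k = 0") (auto simp: min_def split: if_splits)
  then obtain j where k: "k = Suc j" by (cases k) auto
  have hq: "min a b < 2 * 2^j \<and> 2 * 2^j < max a b" using h k by simp
  show False
  proof (cases "a \<le> b")
    case True
    then have "a div 2 < 2^j \<and> 2^j < b - b div 2" using hq arith_up1[of a "2^j" b] by simp
    then show False using assms(4) unfolding good_def
      by (metis max.strict_coboundedI2 min.strict_coboundedI1)
  next
    case False
    then have "b div 2 < 2^j \<and> 2^j < a - a div 2" using hq arith_up2[of b "2^j" a] by simp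
    then show False using assms(3) unfolding good_def
      by (metis max.strict_coboundedI1 min.strict_coboundedI2)
  qed
qed

lemma arith_D: fixes a b :: nat shows
  "nat \<bar>int (a - a div 2) - int (b div 2)\<bar> + nat \<bar>int (a div 2) - int (b - b div 2)\<bar> + (a+b) mod 2
   \<le> nat \<bar>int a - int b\<bar> + a mod 2 + b mod 2"
  by (cases a rule: par; cases b rule: par) (auto simp: abs_if split: if_splits)
definition Q :: "nat \<Rightarrow> nat \<Rightarrow> bool" where
  "Q a b = (cm (a+b) \<le> nat \<bar>int a - int b\<bar> + cm a + cm b \<and>
     (1 \<le> a \<longrightarrow> 1 \<le> b \<longrightarrow> cm (a+b) = nat \<bar>int a - int b\<bar> + cm a + cm b \<longrightarrow> good a b))"

lemma Q_sym: "Q a b = Q b a"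
  unfolding Q_def by (auto simp: good_sym add.commute abs_minus_commute)

lemma arith_1b: "2 \<le> (b::nat) \<Longrightarrow>
  b div 2 - 1 + (1+b) mod 2 \<le> b - 1 + b mod 2 \<and> (3 \<le> b \<longrightarrow> b div 2 - 1 + (1+b) mod 2 < b - 1 + b mod 2)"
  by (cases b rule: par) auto

lemma Q_all: "Q a b"
proof (induction "a+b" arbitrary: a b rule: less_induct)
  case less
  have IH: "\<And>a' b'. a' + b' < a + b \<Longrightarrow> Q a' b'" using less by blast
  have main: "Q x y" if xy: "x \<le> y" "x + y = a + b" for x y
  proof (cases "x = 0")
    case True
    then show ?thesis unfolding Q_def by simp
  next
    case x0: False
    show ?thesis
    proof (cases "x = 1")
      case x1: True
      show ?thesis
      proof (cases "y = 1")
        case True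
        have "cm (Suc (Suc 0)) = 0" using cm_rec[of 2] by (simp add: numeral_2_eq_2)
        then show ?thesis using x1 True good_1'[of 1] unfolding Q_def by simp
      next
        case False
        then have y2: "2 \<le> y" using xy x1 by simp
        have "Q 1 (y div 2)" using IH xy x1 y2 by simp
        moreover have hy1: "1 \<le> y div 2" using y2 by (cases y rule: par) auto
        moreover have "nat \<bar>int 1 - int (y div 2)\<bar> = y div 2 - 1" using hy1 by simp
        ultimately have i1: "cm (1 + y div 2) \<le> (y div 2 - 1) + cm (y div 2)"
          unfolding Q_def by simp
        have e1: "cm (1 + y) = cm (1 + y div 2) + cm (y - y div 2) + (1+y) mod 2"
          using cm_rec[of "1+y"] cm_pair[of 1 y] y2 by simp
        have e2: "cm y = cm (y - y div 2) + cm (y div 2) + y mod 2" using cm_rec y2 by simp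
        have D: "nat \<bar>int 1 - int y\<bar> = y - 1" using y2 by simp
        have ar: "y div 2 - 1 + (1+y) mod 2 \<le> y - 1 + y mod 2 \<and> (3 \<le> y \<longrightarrow> y div 2 - 1 + (1+y) mod 2 < y - 1 + y mod 2)"
          using arith_1b y2 by blast
        have le: "cm (1+y) \<le> (y - 1) + cm 1 + cm y" using i1 e1 e2 ar by simp
        have "y \<le> 2" if eq: "cm (1+y) = (y - 1) + cm 1 + cm y"
        proof (rule ccontr)
          assume "\<not> y \<le> 2" then have "3 \<le> y" by simp
          then have "y div 2 - 1 + (1+y) mod 2 < y - 1 + y mod 2" using ar by blast
          moreover have "cm 1 = 0" by simp
          ultimately show False using eq i1 e1 e2 by linarith
        qed
        then show ?thesis using le x1 D good_1' unfolding Q_def by auto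
      qed
    next
      case False
      then have x2: "2 \<le> x" using x0 by simp
      then have y2: "2 \<le> y" using xy by simp
      let ?A = "x - x div 2" and ?a = "x div 2" and ?B = "y - y div 2" and ?b = "y div 2"
      have q1: "Q ?A ?b" using IH xy x2 y2 by simp
      have q2: "Q ?a ?B" using IH xy x2 y2 by simp
      have p: "1 \<le> ?A" "1 \<le> ?b" "1 \<le> ?a" "1 \<le> ?B" using x2 y2 by auto
      have e: "cm (x+y) = cm (?A + ?b) + cm (?a + ?B) + (x+y) mod 2"
        using cm_rec[of "x+y"] cm_pair[of x y] x2 by simp
      have ex: "cm x = cm ?A + cm ?a + x mod 2" using cm_rec x2 by simp
      have ey: "cm y = cm ?B + cm ?b + y mod 2" using cm_rec y2 by simp
      have i1: "cm (?A + ?b) \<le> nat \<bar>int ?A - int ?b\<bar> + cm ?A + cm ?b" using q1 unfolding Q_def by blast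
      have i2: "cm (?a + ?B) \<le> nat \<bar>int ?a - int ?B\<bar> + cm ?a + cm ?B" using q2 unfolding Q_def by blast
      have ar: "nat \<bar>int ?A - int ?b\<bar> + nat \<bar>int ?a - int ?B\<bar> + (x+y) mod 2
           \<le> nat \<bar>int x - int y\<bar> + x mod 2 + y mod 2" by (rule arith_D)
      have le: "cm (x+y) \<le> nat \<bar>int x - int y\<bar> + cm x + cm y" using e ex ey i1 i2 ar by linarith
      have "good x y" if eq: "cm (x+y) = nat \<bar>int x - int y\<bar> + cm x + cm y"
      proof -
        have "cm (?A + ?b) = nat \<bar>int ?A - int ?b\<bar> + cm ?A + cm ?b"
          using eq e ex ey i1 i2 ar by linarith
        then have g1: "good ?A ?b" using q1 p unfolding Q_def by blast
        have "cm (?a + ?B) = nat \<bar>int ?a - int ?B\<bar> + cm ?a + cm ?B"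
          using eq e ex ey i1 i2 ar by linarith
        then have g2: "good ?a ?B" using q2 p unfolding Q_def by blast
        show ?thesis using good_up[OF _ _ g1 g2] x2 y2 by simp
      qed
      then show ?thesis using le unfolding Q_def by blast
    qed
  qed
  show ?case
  proof (cases "a \<le> b")
    case True then show ?thesis using main by simp
  next
    case False then show ?thesis using main[of b a] Q_sym by simp
  qed
qed


definition R :: "nat \<Rightarrow> nat \<Rightarrow> bool" where
  "R a b = (1 \<le> a \<longrightarrow> 1 \<le> b \<longrightarrow> sm (a+b) \<le> a + b + sm a + sm b \<and>
     (good a b \<longrightarrow> sm (a+b) = a + b + sm a + sm b))"

lemma R_sym: "R a b = R b a"
  unfolding R_def by (auto simp add: good_sym add.commute)

lemma sm2: "sm 2 = 2" by (simp add: sm_rec)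
lemma sm2': "sm (Suc (Suc 0)) = 2" using sm2 by (simp add: numeral_2_eq_2)
lemma sm3: "sm 3 = 5" by (simp add: sm_rec sm2)

lemma R_all: "R a b"
proof (induction "a+b" arbitrary: a b rule: less_induct)
  case less
  have IH: "\<And>a' b'. a' + b' < a + b \<Longrightarrow> R a' b'" using less by blast
  have main: "R x y" if xy: "x \<le> y" "x + y = a + b" for x y
  proof (cases "x = 0")
    case True
    then show ?thesis unfolding R_def by simp
  next
    case x0: False
    show ?thesis
    proof (cases "x = 1")
      case x1: True
      show ?thesis
      proof (cases "y = 1")
        case True
        then show ?thesis using x1 sm2' unfolding R_def by simp
      next
        case False
        then have y2: "2 \<le> y" using xy x1 by simp
        have "R 1 (y div 2)" using IH xy x1 y2 by simp
        then have i1: "sm (1 + y div 2) \<le> 1 + y div 2 + sm (y div 2)"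
          unfolding R_def using y2 by simp
        have e1: "sm (1 + y) = 1 + y + sm (1 + y div 2) + sm (y - y div 2)"
          using sm_rec[of "1+y"] sm_pair[of 1 y] y2 by simp
        have e2: "sm y = y + sm (y - y div 2) + sm (y div 2)" using sm_rec y2 by simp
        have hy: "Suc (y div 2) \<le> y" using y2 by (cases y rule: par) auto
        have le: "sm (1+y) \<le> 1 + y + sm 1 + sm y" using i1 e1 e2 y2 hy by simp
        have "sm (1+y) = 1 + y + sm 1 + sm y" if g: "good 1 y"
        proof -
          have "y = 2" using good_1[OF g] y2 by simp
          then show ?thesis using sm2 sm3 by (simp add: eval_nat_numeral)
        qed
        then show ?thesis using le x1 unfolding R_def by auto
      qed
    next
      case False
      then have x2: "2 \<le> x" using x0 by simp
      then have y2: "2 \<le> y" using xy by simp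
      let ?A = "x - x div 2" and ?a = "x div 2" and ?B = "y - y div 2" and ?b = "y div 2"
      have q1: "R ?A ?b" using IH xy x2 y2 by simp
      have q2: "R ?a ?B" using IH xy x2 y2 by simp
      have p: "1 \<le> ?A" "1 \<le> ?b" "1 \<le> ?a" "1 \<le> ?B" using x2 y2 by auto
      have e: "sm (x+y) = x + y + sm (?A + ?b) + sm (?a + ?B)"
        using sm_rec[of "x+y"] sm_pair[of x y] x2 by simp
      have ex: "sm x = x + sm ?A + sm ?a" using sm_rec x2 by simp
      have ey: "sm y = y + sm ?B + sm ?b" using sm_rec y2 by simp
      have i1: "sm (?A + ?b) \<le> ?A + ?b + sm ?A + sm ?b" using q1 p unfolding R_def by blast
      have i2: "sm (?a + ?B) \<le> ?a + ?B + sm ?a + sm ?B" using q2 p unfolding R_def by blast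
      have le: "sm (x+y) \<le> x + y + sm x + sm y" using e ex ey i1 i2 by linarith
      have "sm (x+y) = x + y + sm x + sm y" if g: "good x y"
      proof -
        have g1: "good ?A ?b" and g2: "good ?a ?B" using good_down[OF g] by auto
        have "sm (?A + ?b) = ?A + ?b + sm ?A + sm ?b" using q1 p g1 unfolding R_def by blast
        moreover have "sm (?a + ?B) = ?a + ?B + sm ?a + sm ?B" using q2 p g2 unfolding R_def by blast
        ultimately show ?thesis using e ex ey by linarith
      qed
      then show ?thesis using le unfolding R_def by blast
    qed
  qed
  show ?case
  proof (cases "a \<le> b")
    case True then show ?thesis using main by simp
  next
    case False then show ?thesis using main[of b a] R_sym by simp
  qed
qed

lemma leaves_pos: "1 \<le> leaves T"
  by (induction T) auto

lemma colless_lb: "cm (leaves T) \<le> colless T"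
proof (induction T)
  case Leaf then show ?case by simp
next
  case (Node l r)
  have "cm (leaves l + leaves r) \<le> nat \<bar>int (leaves l) - int (leaves r)\<bar> + cm (leaves l) + cm (leaves r)"
    using Q_all unfolding Q_def by blast
  then show ?case using Node by simp
qed

lemma sackin_lb: "sm (leaves T) \<le> sackin T"
proof (induction T)
  case Leaf then show ?case by simp
next
  case (Node l r)
  have "sm (leaves l + leaves r) \<le> leaves l + leaves r + sm (leaves l) + sm (leaves r)"
    using R_all leaves_pos unfolding R_def by blast
  then show ?case using Node by simp
qed

lemma opt: "colless T = cm (leaves T) \<Longrightarrow> sackin T = sm (leaves T)"
proof (induction T)
  case Leaf then show ?case by simp
next
  case (Node l r)
  let ?a = "leaves l" and ?b = "leaves r"
  have q: "Q ?a ?b" by (rule Q_all)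
  have i: "cm (?a + ?b) \<le> nat \<bar>int ?a - int ?b\<bar> + cm ?a + cm ?b" using q unfolding Q_def by blast
  have l: "cm ?a \<le> colless l" and r: "cm ?b \<le> colless r" using colless_lb by auto
  have eq: "nat \<bar>int ?a - int ?b\<bar> + colless l + colless r = cm (?a + ?b)" using Node.prems by simp
  have cl: "colless l = cm ?a" using i l r eq by linarith
  have cr: "colless r = cm ?b" using i l r eq by linarith
  have "cm (?a + ?b) = nat \<bar>int ?a - int ?b\<bar> + cm ?a + cm ?b" using i l r eq by linarith
  then have g: "good ?a ?b" using q leaves_pos unfolding Q_def by blast
  have "sm (?a + ?b) = ?a + ?b + sm ?a + sm ?b" using R_all[of ?a ?b] g leaves_pos unfolding R_def by blast
  then show ?case using Node.IH cl cr by simp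
qed

lemma bal_props: "1 \<le> n \<Longrightarrow> leaves (bal n) = n \<and> colless (bal n) = cm n"
proof (induction n rule: less_induct)
  case (less n)
  show ?case
  proof (cases "n = 1")
    case True then show ?thesis by (simp add: bal.simps)
  next
    case False
    then have n2: "2 \<le> n" using less.prems by simp
    have h1: "leaves (bal (n - n div 2)) = n - n div 2 \<and> colless (bal (n - n div 2)) = cm (n - n div 2)"
      using less.IH n2 by simp
    have h2: "leaves (bal (n div 2)) = n div 2 \<and> colless (bal (n div 2)) = cm (n div 2)"
      using less.IH n2 by simp
    have b: "bal n = Node (bal (n - n div 2)) (bal (n div 2))" using n2 by (simp add: bal.simps)
    have d: "nat \<bar>int (n - n div 2) - int (n div 2)\<bar> = n mod 2" by (cases n rule: par) auto
    show ?thesis using b h1 h2 d cm_rec[OF n2] n2 by simp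
  qed
qed

lemma min_colless_eq: "1 \<le> n \<Longrightarrow> min_colless n = cm n"
  unfolding min_colless_def
proof (rule Least_equality)
  assume "1 \<le> n"
  then show "\<exists>T. leaves T = n \<and> colless T = cm n" using bal_props by blast
next
  fix y assume "\<exists>T. leaves T = n \<and> colless T = y"
  then show "cm n \<le> y" using colless_lb by blast
qed

theorem proposition3:
  fixes T :: rbtree and n :: nat
  assumes "leaves T = n"
    and "colless T = min_colless n"
  shows "\<forall>T'. leaves T' = n \<longrightarrow> sackin T \<le> sackin T'"
proof (intro allI impI)
  fix T' assume t': "leaves T' = n"
  have "colless T = cm (leaves T)" using assms min_colless_eq leaves_pos by metis
  then have "sackin T = sm n" using opt assms(1) by simp
  then show "sackin T \<le> sackin T'" using sackin_lb[of T'] t' by simp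
qed

end
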